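(* For every integer $r\ge 3$ and every integer $n\ge 2r^2$, \[\frac{n^r}{2^{r+3}r^r}\le T_r(n)\le \frac{n^re^r}{r^r}.\]
   Context: For an integer $r\ge 2$, an $r$-graph is an $r$-uniform hypergraph, identified with its edge set. $K^r_n$ denotes the complete $r$-graph on $n$ vertices, and $F_r=K^r_{r+1}$. The $F_r$-bootstrap process in $K^r_n$ with initially infected $r$-graph $G_0\subseteq K^r_n$ is defined by: for $i\ge 1$, \[G_i=G_{i-1}\cup\{e\in K^r_n : \text{there is a copy } F'\subseteq K^r_n \text{ of } F_r \text{ with } e=F'\setminus G_{i-1}\},\] i.e. an $r$-set $e\notin G_{i-1}$ becomes infected at step $i$ if there is a vertex $w\notin e$ such that all other $r$-subsets of $e\cup\{w\}$ belong to $G_{i-1}$. The running time $T(F_r,G_0,n)$ is the first $i\ge 0$ with $G_i=G_{i+1}$. Define $T_r(n)=\max_{G_0\subseteq K^r_n}T(F_r,G_0,n)$. *)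

theory Defs
  imports Complex_Main
begin

definition complete_rgraph :: "nat \<Rightarrow> nat \<Rightarrow> nat set set" where
  "complete_rgraph r n = {e. e \<subseteq> {..<n} \<and> card e = r}"

text \<open>One step of the F_r-bootstrap process (F_r = K^r_{r+1}) in K^r_n:
  add every r-set e that is the unique uninfected edge of some copy of F_r,
  a copy being the set of all r-subsets of an (r+1)-subset S of the vertices.\<close>
definition boot_step :: "nat \<Rightarrow> nat \<Rightarrow> nat set set \<Rightarrow> nat set set" where
  "boot_step r n G = G \<union> {e \<in> complete_rgraph r n.
      \<exists>S. S \<subseteq> {..<n} \<and> card S = r + 1 \<and> {f. f \<subseteq> S \<and> card f = r} - G = {e}}"

definition boot_gen :: "nat \<Rightarrow> nat \<Rightarrow> nat set set \<Rightarrow> nat \<Rightarrow> nat set set" where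
  "boot_gen r n G0 i = (boot_step r n ^^ i) G0"

definition running_time :: "nat \<Rightarrow> nat \<Rightarrow> nat set set \<Rightarrow> nat" where
  "running_time r n G0 = (LEAST i. boot_gen r n G0 i = boot_gen r n G0 (Suc i))"

definition max_running_time :: "nat \<Rightarrow> nat \<Rightarrow> nat" where
  "max_running_time r n = Max (running_time r n ` Pow (complete_rgraph r n))"

end

theory Submission
  imports Defs
begin


fun gray :: "nat \<Rightarrow> nat \<Rightarrow> nat \<Rightarrow> (nat \<Rightarrow> nat)" where
  "gray m 0 t = (\<lambda>_. 0)"
| "gray m (Suc d) t = (let q = t div m^d; s = t mod m^d in
     (gray m d (if even q then s else m^d - 1 - s))(d := q))"

definition Lp :: "nat \<Rightarrow> nat \<Rightarrow> nat \<Rightarrow> (nat \<Rightarrow> nat)" where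
  "Lp m j c = (if even c then gray m j (m^j - 1) else gray m j 0)"

definition tr :: "nat \<Rightarrow> nat \<Rightarrow> nat \<Rightarrow> (nat \<Rightarrow> nat) \<Rightarrow> (nat \<Rightarrow> nat) \<Rightarrow> bool" where
  "tr m j c x y \<longleftrightarrow> Suc c < m \<and> {x j, y j} = {c, Suc c} \<and> (\<forall>k. k \<noteq> j \<longrightarrow> x k = y k)
     \<and> (\<forall>k<j. x k = Lp m j c k)"

lemma gray_range: "t < m^d \<Longrightarrow> (\<forall>k<d. gray m d t k < m) \<and> (\<forall>k\<ge>d. gray m d t k = 0)"
proof (induction d arbitrary: t)
  case 0
  then show ?case by simp
next
  case (Suc d)
  define q where "q = t div m^d"
  define s where "s = t mod m^d"
  define s' where "s' = (if even q then s else m^d - 1 - s)"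
  have mpos: "m^d > 0" using Suc.prems by (cases "m = 0") auto
  have "s < m^d" using mpos by (simp add: s_def)
  hence s': "s' < m^d" by (auto simp: s'_def)
  have q: "q < m" using Suc.prems by (simp add: q_def less_mult_imp_div_less mult.commute)
  have g: "gray m (Suc d) t = (gray m d s')(d := q)" by (simp add: q_def s_def s'_def Let_def)
  show ?case using Suc.IH[OF s'] q unfolding g by auto
qed

lemma gray_inj: "t < m^d \<Longrightarrow> t' < m^d \<Longrightarrow> gray m d t = gray m d t' \<Longrightarrow> t = t'"
proof (induction d arbitrary: t t')
  case 0
  then show ?case by simp
next
  case (Suc d)
  define q where "q = t div m^d"
  define s where "s = t mod m^d"
  define s' where "s' = (if even q then s else m^d - 1 - s)"
  define q2 where "q2 = t' div m^d"
  define s2 where "s2 = t' mod m^d"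
  define s2' where "s2' = (if even q2 then s2 else m^d - 1 - s2)"
  have mpos: "m^d > 0" using Suc.prems by (cases "m = 0") auto
  have "s < m^d" "s2 < m^d" using mpos by (simp_all add: s_def s2_def)
  hence s': "s' < m^d" "s2' < m^d" by (auto simp: s'_def s2'_def)
  have g: "gray m (Suc d) t = (gray m d s')(d := q)" by (simp add: q_def s_def s'_def Let_def)
  have g2: "gray m (Suc d) t' = (gray m d s2')(d := q2)" by (simp add: q2_def s2_def s2'_def Let_def)
  have "q = q2" using Suc.prems(3) g g2 by (metis fun_upd_same)
  moreover have "gray m d s' = gray m d s2'"
  proof
    fix k
    show "gray m d s' k = gray m d s2' k"
    proof (cases "k = d")
      case True
      then show ?thesis using gray_range[OF s'(1)] gray_range[OF s'(2)] by simp
    next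
      case False
      then show ?thesis using Suc.prems(3) g g2 by (metis fun_upd_other)
    qed
  qed
  hence "s' = s2'" using Suc.IH s' by blast
  ultimately have "s = s2" using \<open>s < m^d\<close> \<open>s2 < m^d\<close> by (auto simp: s'_def s2'_def split: if_splits)
  then show ?case using \<open>q = q2\<close> by (metis div_mult_mod_eq q_def q2_def s_def s2_def)
qed

lemma gray_Suc_eq: "s < m^d \<Longrightarrow> gray m (Suc d) (q*m^d + s) = (gray m d (if even q then s else m^d - 1 - s))(d := q)"
proof -
  assume s: "s < m^d"
  hence "m^d > 0" by linarith
  hence "(q*m^d + s) div m^d = q" "(q*m^d + s) mod m^d = s" using s by auto
  then show ?thesis by (simp add: Let_def)
qed

declare gray.simps(2)[simp del]

lemma tr_sym: "tr m j c x y \<Longrightarrow> tr m j c y x"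
  unfolding tr_def by (metis insert_commute less_not_refl)

lemma tr_upd: "tr m j c x y \<Longrightarrow> j < d \<Longrightarrow> tr m j c (x(d := q)) (y(d := q))"
  unfolding tr_def by auto

lemma gray_step: "Suc t < m^d \<Longrightarrow> \<exists>j<d. \<exists>c. tr m j c (gray m d t) (gray m d (Suc t))"
proof (induction d arbitrary: t)
  case 0
  then show ?case by simp
next
  case (Suc d)
  have mpos: "m^d > 0" using Suc.prems by (cases "m = 0") auto
  define q where "q = t div m^d"
  define s where "s = t mod m^d"
  have t: "t = q*m^d + s" using div_mult_mod_eq[of t "m^d"] by (simp add: q_def s_def)
  have s: "s < m^d" using mpos by (simp add: s_def)
  show ?case
  proof (cases "Suc s < m^d")
    case True
    have t1: "Suc t = q*m^d + Suc s" using t by simp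
    show ?thesis
    proof (cases "even q")
      case True
      obtain j c where jc: "j < d" "tr m j c (gray m d s) (gray m d (Suc s))" using Suc.IH[OF \<open>Suc s < m^d\<close>] by blast
      have g1: "gray m (Suc d) t = (gray m d s)(d := q)" unfolding t gray_Suc_eq[OF s] using True by simp
      have g2: "gray m (Suc d) (Suc t) = (gray m d (Suc s))(d := q)" unfolding t1 gray_Suc_eq[OF \<open>Suc s < m^d\<close>] using True by simp
      show ?thesis unfolding g1 g2 using tr_upd[OF jc(2) jc(1)] jc(1) less_SucI by blast
    next
      case False
      have e: "Suc (m^d - 1 - Suc s) = m^d - 1 - s" using \<open>Suc s < m^d\<close> by simp
      have l: "Suc (m^d - 1 - Suc s) < m^d" using \<open>Suc s < m^d\<close> by linarith
      obtain j c where jc: "j < d" "tr m j c (gray m d (m^d - 1 - Suc s)) (gray m d (m^d - 1 - s))"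
        using Suc.IH[OF l] unfolding e by blast
      have g1: "gray m (Suc d) t = (gray m d (m^d - 1 - s))(d := q)" unfolding t gray_Suc_eq[OF s] using False by simp
      have g2: "gray m (Suc d) (Suc t) = (gray m d (m^d - 1 - Suc s))(d := q)" unfolding t1 gray_Suc_eq[OF \<open>Suc s < m^d\<close>] using False by simp
      show ?thesis unfolding g1 g2 using tr_upd[OF tr_sym[OF jc(2)] jc(1)] jc(1) less_SucI by blast
    qed
  next
    case False
    hence s1: "s = m^d - 1" using s by simp
    have t1: "Suc t = Suc q * m^d + 0" using t s1 mpos by simp
    have qm: "Suc q < m"
    proof -
      have "Suc q * m^d \<le> Suc t" using t1 by simp
      also have "Suc t < m * m^d" using Suc.prems by simp
      finally have "Suc q * m^d < m * m^d" .
      thus ?thesis using mult_less_cancel2 by blast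
    qed
    define s' where "s' = (if even q then m^d - 1 else 0)"
    have g0: "gray m (Suc d) t = (gray m d (if even q then s else m^d - 1 - s))(d := q)"
      using gray_Suc_eq[OF s, of q] t by simp
    have g1: "gray m (Suc d) t = (gray m d s')(d := q)" unfolding g0 s1 s'_def by simp
    have g2: "gray m (Suc d) (Suc t) = (gray m d s')(d := Suc q)" unfolding t1 gray_Suc_eq[OF mpos] s'_def by simp
    have "tr m d q (gray m (Suc d) t) (gray m (Suc d) (Suc t))"
      unfolding g1 g2 tr_def Lp_def s'_def using qm by auto
    then show ?thesis by blast
  qed
qed

lemma gray_complete:
  assumes "j < d" "Suc c < m" "\<forall>k<d. y k < m" "\<forall>k\<ge>d. y k = 0" "y j = c" "\<forall>k<j. y k = Lp m j c k"
  shows "\<exists>t. Suc t < m^d \<and> {gray m d t, gray m d (Suc t)} = {y, y(j := Suc c)}"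
  using assms
proof (induction d arbitrary: y)
  case 0
  then show ?case by simp
next
  case (Suc d)
  have mpos: "m^d > 0" using Suc.prems by (cases "m = 0") auto
  show ?case
  proof (cases "j = d")
    case True
    define s' where "s' = (if even c then m^d - 1 else 0)"
    have s'l: "s' < m^d" using mpos by (simp add: s'_def)
    have L: "Lp m d c = gray m d s'" by (simp add: Lp_def s'_def)
    have y: "y = (gray m d s')(d := c)"
    proof
      fix k
      show "y k = ((gray m d s')(d := c)) k"
        using Suc.prems gray_range[OF s'l] True L by (cases k d rule: linorder_cases) auto
    qed
    have e0: "(c+1)*m^d = c*m^d + m^d" by simp
    have e1: "(c+1)*m^d - 1 = c*m^d + (m^d - 1)" unfolding e0 using mpos by linarith
    have a: "m^d - 1 < m^d" using mpos by simp
    have g1: "gray m (Suc d) ((c+1)*m^d - 1) = (gray m d s')(d := c)"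
      unfolding e1 using gray_Suc_eq[OF a, of c] by (simp add: s'_def)
    have e2: "Suc ((c+1)*m^d - 1) = (Suc c)*m^d + 0" using mpos by simp
    have g2: "gray m (Suc d) (Suc ((c+1)*m^d - 1)) = (gray m d s')(d := Suc c)"
      unfolding e2 gray_Suc_eq[OF mpos] by (simp add: s'_def)
    have lt: "Suc ((c+1)*m^d - 1) < m^Suc d"
    proof -
      have "Suc ((c+1)*m^d - 1) = (c+1)*m^d" using mpos by simp
      also have "\<dots> < m * m^d" using mult_less_mono1[OF Suc.prems(2) mpos] by simp
      finally show ?thesis by simp
    qed
    show ?thesis
      by (rule exI[of _ "(c+1)*m^d - 1"]) (use lt g1 g2 y True in auto)
  next
    case False
    hence jd: "j < d" using Suc.prems by simp
    define y' where "y' = y(d := 0)"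
    have "\<exists>u. Suc u < m^d \<and> {gray m d u, gray m d (Suc u)} = {y', y'(j := Suc c)}"
    proof (rule Suc.IH)
      show "j < d" by (rule jd)
      show "Suc c < m" by (rule Suc.prems(2))
      show "\<forall>k<d. y' k < m" using Suc.prems(3) by (simp add: y'_def)
      show "\<forall>k\<ge>d. y' k = 0" using Suc.prems(4) by (simp add: y'_def)
      show "y' j = c" using Suc.prems(5) jd by (simp add: y'_def)
      show "\<forall>k<j. y' k = Lp m j c k" using Suc.prems(6) jd by (simp add: y'_def)
    qed
    then obtain u where u: "Suc u < m^d" "{gray m d u, gray m d (Suc u)} = {y', y'(j := Suc c)}" by blast
    define q where "q = y d"
    have q: "q < m" using Suc.prems by (simp add: q_def)
    have yy: "y'(d := q) = y" "(y'(j := Suc c))(d := q) = y(j := Suc c)" using jd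
      by (auto simp: y'_def q_def fun_eq_iff)
    have setq: "{(gray m d u)(d := q), (gray m d (Suc u))(d := q)} = {y, y(j := Suc c)}"
    proof -
      have "{(gray m d u)(d := q), (gray m d (Suc u))(d := q)} = (\<lambda>f. f(d := q)) ` {gray m d u, gray m d (Suc u)}"
        by simp
      also have "\<dots> = {y, y(j := Suc c)}" unfolding u(2) using yy by simp
      finally show ?thesis .
    qed
    have ltq: "q*m^d + m^d \<le> m^Suc d"
    proof -
      have "q*m^d + m^d = Suc q * m^d" by simp
      also have "\<dots> \<le> m * m^d" using q by (intro mult_right_mono) auto
      finally show ?thesis by simp
    qed
    show ?thesis
    proof (cases "even q")
      case True
      have "gray m (Suc d) (q*m^d + u) = (gray m d u)(d := q)" using gray_Suc_eq[of u m d q] u True by simp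
      moreover have "gray m (Suc d) (Suc (q*m^d + u)) = (gray m d (Suc u))(d := q)"
        using gray_Suc_eq[of "Suc u" m d q] u True by simp
      moreover have "Suc (q*m^d + u) < m^Suc d" using ltq u by linarith
      ultimately show ?thesis using setq by (metis (no_types, lifting))
    next
      case False
      have a: "m^d - 2 - u < m^d" "Suc (m^d - 2 - u) < m^d" using u mpos by auto
      have b: "m^d - 1 - (m^d - 2 - u) = Suc u" "m^d - 1 - Suc (m^d - 2 - u) = u" using u by auto
      have "gray m (Suc d) (q*m^d + (m^d - 2 - u)) = (gray m d (Suc u))(d := q)"
        using gray_Suc_eq[OF a(1), of q] False b by simp
      moreover have "gray m (Suc d) (Suc (q*m^d + (m^d - 2 - u))) = (gray m d u)(d := q)"
        using gray_Suc_eq[OF a(2), of q] False b by simp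
      moreover have "Suc (q*m^d + (m^d - 2 - u)) < m^Suc d" using ltq u by linarith
      moreover have "{(gray m d (Suc u))(d := q), (gray m d u)(d := q)} = {y, y(j := Suc c)}"
        using setq by (metis insert_commute)
      ultimately show ?thesis by (metis (no_types, lifting))
    qed
  qed
qed




locale constr =
  fixes m r :: nat
  assumes r3: "3 \<le> r" and m2: "2 \<le> m"
begin

definition enc :: "nat \<Rightarrow> nat \<Rightarrow> nat" where "enc k v = 2*m*k + v"
definition E :: "(nat \<Rightarrow> nat) \<Rightarrow> nat set" where "E y = (\<lambda>k. enc k (y k)) ` {..<r}"
definition pnorm :: "(nat \<Rightarrow> nat) \<Rightarrow> bool" where
  "pnorm y \<longleftrightarrow> (\<forall>k<r. y k < 2*m) \<and> (\<forall>k\<ge>r. y k = 0)"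
definition Ycond :: "nat \<Rightarrow> nat \<Rightarrow> (nat \<Rightarrow> nat) \<Rightarrow> bool" where
  "Ycond j c y \<longleftrightarrow> j < r \<and> Suc c < m \<and> (\<forall>k<r. y k < m) \<and> (\<forall>k\<ge>r. y k = 0)
     \<and> (y j = c \<or> y j = Suc c) \<and> (\<forall>k<j. y k = Lp m j c k)"
definition isStep :: "nat set \<Rightarrow> bool" where
  "isStep T \<longleftrightarrow> (\<exists>j c y. Ycond j c y \<and> T = insert (enc j (m + c)) (E y))"
definition live :: "nat set \<Rightarrow> bool" where
  "live f \<longleftrightarrow> (\<exists>T. isStep T \<and> f \<subseteq> T)"

lemma enc_eq: "v < 2*m \<Longrightarrow> v' < 2*m \<Longrightarrow> enc k v = enc k' v' \<longleftrightarrow> k = k' \<and> v = v'"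
proof
  assume v: "v < 2*m" "v' < 2*m" and e: "enc k v = enc k' v'"
  have "enc k v div (2*m) = k" "enc k v mod (2*m) = v" using v by (simp_all add: enc_def)
  moreover have "enc k' v' div (2*m) = k'" "enc k' v' mod (2*m) = v'" using v by (simp_all add: enc_def)
  ultimately show "k = k' \<and> v = v'" using e by metis
qed simp

lemma Ycond_norm: "Ycond j c y \<Longrightarrow> pnorm y"
  unfolding Ycond_def pnorm_def by auto

lemma mem_E: "pnorm y \<Longrightarrow> v < 2*m \<Longrightarrow> enc k v \<in> E y \<longleftrightarrow> k < r \<and> y k = v"
  unfolding E_def pnorm_def using enc_eq by auto

lemma E_mem: "k < r \<Longrightarrow> enc k (y k) \<in> E y"
  unfolding E_def by auto

lemma E_elem: "x \<in> E y \<Longrightarrow> \<exists>k<r. x = enc k (y k)"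
  unfolding E_def by auto

lemma card_E: "pnorm y \<Longrightarrow> card (E y) = r"
proof -
  assume n: "pnorm y"
  have "inj_on (\<lambda>k. enc k (y k)) {..<r}"
    using n enc_eq unfolding pnorm_def inj_on_def by auto
  then show ?thesis unfolding E_def by (simp add: card_image)
qed

lemma finite_E: "finite (E y)" unfolding E_def by simp

lemma E_inj: "pnorm x \<Longrightarrow> pnorm y \<Longrightarrow> E x = E y \<Longrightarrow> x = y"
proof
  fix k
  assume nx: "pnorm x" and ny: "pnorm y" and e: "E x = E y"
  show "x k = y k"
  proof (cases "k < r")
    case True
    have "enc k (x k) \<in> E x" using True unfolding E_def by auto
    hence "enc k (x k) \<in> E y" using e by simp
    then show ?thesis using mem_E[OF ny] nx True unfolding pnorm_def by auto
  next
    case False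
    then show ?thesis using nx ny unfolding pnorm_def by auto
  qed
qed

lemma E_sub_pair:
  assumes nx: "pnorm x" and nz: "pnorm z" and nw: "pnorm w" and agree: "\<forall>k. k \<noteq> j \<longrightarrow> x k = z k"
    and sub: "E w \<subseteq> E x \<union> E z"
  shows "w = x \<or> w = z"
proof -
  have w: "\<forall>k<r. w k = x k \<or> w k = z k"
  proof (intro allI impI)
    fix k assume k: "k < r"
    have "enc k (w k) \<in> E w" using k unfolding E_def by auto
    hence "enc k (w k) \<in> E x \<or> enc k (w k) \<in> E z" using sub by auto
    then show "w k = x k \<or> w k = z k" using mem_E[OF nx] mem_E[OF nz] nw k unfolding pnorm_def by auto
  qed
  show ?thesis
  proof (cases "j < r \<and> w j \<noteq> x j")
    case True
    have "w = z"
    proof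
      fix k
      show "w k = z k"
      proof (cases "k < r")
        case True
        then show ?thesis using w agree \<open>j < r \<and> w j \<noteq> x j\<close> by metis
      next
        case False
        then show ?thesis using nw nz unfolding pnorm_def by simp
      qed
    qed
    then show ?thesis by simp
  next
    case False
    have "w = x"
    proof
      fix k
      show "w k = x k"
      proof (cases "k < r")
        case True
        then show ?thesis using w agree \<open>\<not> (j < r \<and> w j \<noteq> x j)\<close> by metis
      next
        case False
        then show ?thesis using nw nx unfolding pnorm_def by simp
      qed
    qed
    then show ?thesis by simp
  qed
qed

lemma E_upd: "j < r \<Longrightarrow> E x \<union> E (x(j := v)) = insert (enc j v) (E x)"
  unfolding E_def by auto

lemma E_upd2:
  assumes "pnorm y" "k < r" "v < 2*m"
  shows "E (y(k := v)) = insert (enc k v) (E y - {enc k (y k)})"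
proof -
  have "{..<r} = insert k ({..<r} - {k})" using assms(2) by auto
  hence "E (y(k := v)) = insert (enc k v) ((\<lambda>i. enc i ((y(k := v)) i)) ` ({..<r} - {k}))"
    unfolding E_def by (metis image_insert fun_upd_same)
  also have "(\<lambda>i. enc i ((y(k := v)) i)) ` ({..<r} - {k}) = (\<lambda>i. enc i (y i)) ` ({..<r} - {k})"
    by (rule image_cong) auto
  finally have 1: "E (y(k := v)) = insert (enc k v) ((\<lambda>i. enc i (y i)) ` ({..<r} - {k}))" .
  have "(\<lambda>i. enc i (y i)) ` ({..<r} - {k}) = E y - {enc k (y k)}"
  proof
    show "(\<lambda>i. enc i (y i)) ` ({..<r} - {k}) \<subseteq> E y - {enc k (y k)}"
    proof
      fix x assume "x \<in> (\<lambda>i. enc i (y i)) ` ({..<r} - {k})"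
      then obtain i where i: "i < r" "i \<noteq> k" "x = enc i (y i)" by auto
      have "enc i (y i) \<noteq> enc k (y k)" using enc_eq i assms unfolding pnorm_def by simp
      then show "x \<in> E y - {enc k (y k)}" using i unfolding E_def by auto
    qed
  next
    show "E y - {enc k (y k)} \<subseteq> (\<lambda>i. enc i (y i)) ` ({..<r} - {k})"
      unfolding E_def by auto
  qed
  then show ?thesis using 1 by simp
qed

lemma step_card: "isStep T \<Longrightarrow> card T = Suc r"
proof -
  assume "isStep T"
  then obtain j c y where Y: "Ycond j c y" and T: "T = insert (enc j (m + c)) (E y)"
    unfolding isStep_def by blast
  have n: "pnorm y" using Y by (rule Ycond_norm)
  have lt: "m + c < 2*m" "y j < m" using Y unfolding Ycond_def by auto
  have "enc j (m + c) \<notin> E y"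
  proof
    assume "enc j (m + c) \<in> E y"
    then have "y j = m + c" using mem_E[OF n lt(1)] by simp
    with lt(2) show False by simp
  qed
  then show ?thesis using T card_E[OF n] finite_E by simp
qed

lemma step_bound: "isStep T \<Longrightarrow> T \<subseteq> {..<2*m*r}"
proof
  fix x assume "isStep T" "x \<in> T"
  then obtain j c y where Y: "Ycond j c y" and T: "T = insert (enc j (m + c)) (E y)"
    unfolding isStep_def by blast
  have le: "\<And>k v. k < r \<Longrightarrow> v < 2*m \<Longrightarrow> enc k v < 2*m*r"
  proof -
    fix k v :: nat assume "k < r" "v < 2*m"
    hence "Suc k \<le> r" by simp
    hence "2*m*Suc k \<le> 2*m*r" by (intro mult_left_mono) auto
    thus "enc k v < 2*m*r" using \<open>v < 2*m\<close> by (simp add: enc_def)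
  qed
  have jc: "j < r" "m + c < 2*m" using Y unfolding Ycond_def by auto
  show "x \<in> {..<2*m*r}"
  proof (cases "x = enc j (m + c)")
    case True
    then show ?thesis using le[OF jc] by simp
  next
    case False
    then have "x \<in> E y" using \<open>x \<in> T\<close> T by simp
    then obtain k where k: "k < r" "x = enc k (y k)" using E_elem by blast
    have "y k < 2*m" using Y k(1) unfolding Ycond_def by fastforce
    then show ?thesis using le[OF k(1)] k(2) by simp
  qed
qed

lemma sub_remove: "finite S \<Longrightarrow> f \<subseteq> S \<Longrightarrow> card S = Suc (card f) \<Longrightarrow> \<exists>p\<in>S. f = S - {p}"
proof -
  assume fin: "finite S" and sub: "f \<subseteq> S" and c: "card S = Suc (card f)"
  have "S - f \<noteq> {}" using sub c by auto
  then obtain p where p: "p \<in> S" "p \<notin> f" by auto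
  have "f \<subseteq> S - {p}" using sub p by auto
  moreover have "card (S - {p}) = card f" using c p fin by simp
  ultimately have "f = S - {p}" using fin by (metis card_subset_eq finite_Diff)
  then show ?thesis using p by blast
qed

lemma main_ne_aux: "v < m \<Longrightarrow> c < m \<Longrightarrow> enc k v \<noteq> enc j (m + c)"
  using enc_eq[of v "m + c" k j] by simp

lemma aux_notin_E: "Ycond j' c' y \<Longrightarrow> c < m \<Longrightarrow> enc j (m + c) \<notin> E y"
proof
  assume Y: "Ycond j' c' y" and c: "c < m" and "enc j (m + c) \<in> E y"
  then obtain k where k: "k < r" "enc j (m + c) = enc k (y k)" using E_elem by blast
  have "y k < m" using Y k(1) unfolding Ycond_def by auto
  then show False using main_ne_aux[OF _ c] k(2) by metis
qed

lemma caseA: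
  assumes p: "p1 \<in> S" "p2 \<in> S" "p3 \<in> S" "p1 \<noteq> p2" "p1 \<noteq> p3" "p2 \<noteq> p3"
    and n: "pnorm y1" "pnorm y2" "pnorm y3"
    and e: "S - {p1} = E y1" "S - {p2} = E y2" "S - {p3} = E y3"
  shows False
proof -
  have "p1 \<in> E y2" using p e by blast
  then obtain i1 where i1: "i1 < r" "p1 = enc i1 (y2 i1)" using E_elem by blast
  have "p1 \<notin> E y1" using e by blast
  hence d1: "y1 i1 \<noteq> y2 i1" using i1 E_mem[of i1 y1] by auto
  have "p2 \<in> E y1" using p e by blast
  then obtain i2 where i2: "i2 < r" "p2 = enc i2 (y1 i2)" using E_elem by blast
  have "p2 \<notin> E y2" using e by blast
  hence d2: "y2 i2 \<noteq> y1 i2" using i2 E_mem[of i2 y2] by auto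
  have lt: "y1 i1 < 2*m" "y2 i1 < 2*m" "y1 i2 < 2*m" "y2 i2 < 2*m" using n i1 i2 unfolding pnorm_def by auto
  have "p1 \<in> E y3" using p e by blast
  hence y31: "y3 i1 = y2 i1" using mem_E[OF n(3) lt(2)] i1 by simp
  have "p2 \<in> E y3" using p e by blast
  hence y32: "y3 i2 = y1 i2" using mem_E[OF n(3) lt(3)] i2 by simp
  have a1: "enc i1 (y1 i1) \<in> S" using e(1) i1 unfolding E_def by blast
  have a2: "enc i1 (y1 i1) \<notin> E y3" using mem_E[OF n(3) lt(1)] y31 d1 by simp
  have a: "enc i1 (y1 i1) = p3" using a1 a2 e(3) by blast
  have b1: "enc i2 (y2 i2) \<in> S" using e(2) i2 unfolding E_def by blast
  have b2: "enc i2 (y2 i2) \<notin> E y3" using mem_E[OF n(3) lt(4)] y32 d2 by simp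
  have b: "enc i2 (y2 i2) = p3" using b1 b2 e(3) by blast
  have "enc i1 (y1 i1) = enc i2 (y2 i2)" using a b by simp
  hence "i1 = i2 \<and> y1 i1 = y2 i2" using enc_eq[OF lt(1) lt(4)] by blast
  then show False using d1 by metis
qed

lemma Ycond_upd:
  assumes "Ycond j c yb" "Ycond j c yc" "k < r"
  shows "Ycond j c (yb(k := yc k))"
  using assms unfolding Ycond_def by auto

lemma caseB:
  assumes fin: "finite S" and cS: "card S = Suc r"
    and p: "pb \<in> S" "pc \<in> S" "px \<in> S" "pb \<noteq> pc" "pb \<noteq> px" "pc \<noteq> px" "w \<in> S" "w \<noteq> pb" "w \<noteq> pc"
    and Yb: "Ycond j c yb" and Yc: "Ycond j c yc" and Yx: "Ycond jx cx yx"
    and w: "w = enc j (m + c)"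
    and Hb: "S - {pb} \<subseteq> insert w (E yb)" and Hc: "S - {pc} \<subseteq> insert w (E yc)"
    and Hx: "S - {px} \<subseteq> insert (enc jx (m + cx)) (E yx)"
  shows "isStep S"
proof -
  have nb: "pnorm yb" and nc: "pnorm yc" and nx: "pnorm yx" using Yb Yc Yx by (simp_all add: Ycond_norm)
  have cm: "c < m" "cx < m" using Yb Yx unfolding Ycond_def by auto
  have stb: "isStep (insert w (E yb))" using Yb w unfolding isStep_def by blast
  have stc: "isStep (insert w (E yc))" using Yc w unfolding isStep_def by blast
  show ?thesis
  proof (cases "pb \<in> insert w (E yb)")
    case True
    hence "S \<subseteq> insert w (E yb)" using Hb by blast
    moreover have "card (insert w (E yb)) = card S" using step_card[OF stb] cS by simp
    ultimately have "S = insert w (E yb)" using finite_E by (metis card_subset_eq finite_insert)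
    then show ?thesis using stb by simp
  next
    case nbT: False
    show ?thesis
    proof (cases "pc \<in> insert w (E yc)")
      case True
      hence "S \<subseteq> insert w (E yc)" using Hc by blast
      moreover have "card (insert w (E yc)) = card S" using step_card[OF stc] cS by simp
      ultimately have "S = insert w (E yc)" using finite_E by (metis card_subset_eq finite_insert)
      then show ?thesis using stc by simp
    next
      case ncT: False
      have "pb \<in> E yc" using p Hc by blast
      then obtain k where k: "k < r" "pb = enc k (yc k)" using E_elem by blast
      have ltb: "yb k < m" "yc k < m" "yx k < m" using Yb Yc Yx k(1) unfolding Ycond_def by auto
      have dk: "yb k \<noteq> yc k" using nbT k E_mem[of k yb] by auto
      define q where "q = enc k (yb k)"
      show ?thesis
      proof (cases "q \<in> S")
        case True
        have qpb: "q \<noteq> pb" using enc_eq[of "yb k" "yc k" k k] ltb dk k(2) by (simp add: q_def)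
        have "q = pc"
        proof (rule ccontr)
          assume "q \<noteq> pc"
          hence "q \<in> insert w (E yc)" using True Hc by blast
          moreover have "q \<noteq> w" using main_ne_aux[OF ltb(1) cm(1)] w q_def by simp
          ultimately have "q \<in> E yc" by simp
          hence "yc k = yb k" using mem_E[OF nc, of "yb k" k] ltb by (simp add: q_def)
          then show False using dk by simp
        qed
        have "pb \<in> insert (enc jx (m + cx)) (E yx)" using p Hx by blast
        moreover have "pb \<noteq> enc jx (m + cx)" using main_ne_aux[OF ltb(2) cm(2)] k(2) by simp
        ultimately have "pb \<in> E yx" by simp
        hence e1: "yx k = yc k" using mem_E[OF nx, of "yc k" k] ltb k by simp
        have "q \<in> insert (enc jx (m + cx)) (E yx)" using p Hx \<open>q = pc\<close> by blast
        moreover have "q \<noteq> enc jx (m + cx)" using main_ne_aux[OF ltb(1) cm(2)] q_def by simp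
        ultimately have "q \<in> E yx" by simp
        hence e2: "yx k = yb k" using mem_E[OF nx, of "yb k" k] ltb k by (simp add: q_def)
        show ?thesis using e1 e2 dk by simp
      next
        case False
        define R where "R = S - {w}"
        have sub: "R - {pb} \<subseteq> E yb - {q}"
        proof
          fix x assume "x \<in> R - {pb}"
          hence "x \<in> S" "x \<noteq> w" "x \<noteq> pb" by (auto simp: R_def)
          hence "x \<in> E yb" using Hb by blast
          moreover have "x \<noteq> q" using False \<open>x \<in> S\<close> by auto
          ultimately show "x \<in> E yb - {q}" by simp
        qed
        have qin: "q \<in> E yb" using k(1) unfolding q_def E_def by auto
        have c1: "card (E yb - {q}) = r - 1" using card_E[OF nb] qin finite_E by simp
        have "pb \<in> R" using p by (simp add: R_def)
        have c2: "card (R - {pb}) = r - 1"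
          using cS p fin \<open>pb \<in> R\<close> by (simp add: R_def)
        have eq: "R - {pb} = E yb - {q}"
          using sub c1 c2 finite_E by (metis card_subset_eq finite_Diff)
        define ys where "ys = yb(k := yc k)"
        have "yc k < 2*m" using ltb by simp
        have Es: "E ys = insert pb (E yb - {q})"
          unfolding ys_def using E_upd2[OF nb k(1) \<open>yc k < 2*m\<close>] k(2) q_def by simp
        have "R = insert pb (R - {pb})" using \<open>pb \<in> R\<close> by auto
        hence "R = E ys" using Es eq by simp
        hence "S = insert w (E ys)" using p(7) by (auto simp: R_def)
        moreover have "Ycond j c ys" unfolding ys_def by (rule Ycond_upd[OF Yb Yc k(1)])
        ultimately show ?thesis using w unfolding isStep_def by blast
      qed
    qed
  qed
qed

lemma caseB':
  assumes fin: "finite S" and cS: "card S = Suc r"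
    and p: "p1 \<in> S" "p2 \<in> S" "p3 \<in> S" "p1 \<noteq> p2" "p1 \<noteq> p3" "p2 \<noteq> p3"
    and Y: "Ycond j1 c1 y1" "Ycond j2 c2 y2" "Ycond j3 c3 y3"
    and H: "S - {p1} \<subseteq> insert (enc j1 (m + c1)) (E y1)"
      "S - {p2} \<subseteq> insert (enc j2 (m + c2)) (E y2)"
      "S - {p3} \<subseteq> insert (enc j3 (m + c3)) (E y3)"
    and w1: "enc j1 (m + c1) \<in> S - {p1}"
  shows "isStep S"
proof -
  define w where "w = enc j1 (m + c1)"
  have cm: "c1 < m" "c2 < m" "c3 < m" using Y unfolding Ycond_def by auto
  have same: "j' = j1 \<and> c' = c1"
    if "w \<in> S - {p'}" "S - {p'} \<subseteq> insert (enc j' (m + c')) (E y')" "Ycond j' c' y'" for p' j' c' y'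
  proof -
    have "c' < m" using that(3) unfolding Ycond_def by auto
    have "w \<in> insert (enc j' (m + c')) (E y')" using that by blast
    moreover have "w \<notin> E y'" unfolding w_def by (rule aux_notin_E[OF that(3) cm(1)])
    ultimately have "enc j1 (m + c1) = enc j' (m + c')" by (simp add: w_def)
    then show ?thesis using enc_eq[of "m + c1" "m + c'" j1 j'] cm(1) \<open>c' < m\<close> by simp
  qed
  have wS: "w \<in> S" "w \<noteq> p1" using w1 by (auto simp: w_def)
  show ?thesis
  proof (cases "w = p2")
    case True
    have "w \<in> S - {p3}" using wS True p by auto
    from same[OF this H(3) Y(3)] have e: "j3 = j1" "c3 = c1" by auto
    have Hc: "S - {p3} \<subseteq> insert w (E y3)" using H(3) e by (simp add: w_def)
    have Yc: "Ycond j1 c1 y3" using Y(3) e by simp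
    show ?thesis
      by (rule caseB[OF fin cS p(1) p(3) p(2) p(5) p(4) p(6)[symmetric] wS(1) wS(2) _ Y(1) Yc Y(2) w_def H(1)[folded w_def] Hc H(2)])
         (use True p in auto)
  next
    case False
    have "w \<in> S - {p2}" using wS False by auto
    from same[OF this H(2) Y(2)] have e2: "j2 = j1" "c2 = c1" by auto
    show ?thesis
    proof (cases "w = p3")
      case True
      have Hc: "S - {p2} \<subseteq> insert w (E y2)" using H(2) e2 by (simp add: w_def)
      have Yc: "Ycond j1 c1 y2" using Y(2) e2 by simp
      show ?thesis
        by (rule caseB[OF fin cS p(1) p(2) p(3) p(4) p(5) p(6) wS(1) wS(2) False Y(1) Yc Y(3) w_def H(1)[folded w_def] Hc H(3)])
    next
      case False
      have Hc: "S - {p2} \<subseteq> insert w (E y2)" using H(2) e2 by (simp add: w_def)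
      have Yc: "Ycond j1 c1 y2" using Y(2) e2 by simp
      show ?thesis
        by (rule caseB[OF fin cS p(1) p(2) p(3) p(4) p(5) p(6) wS(1) wS(2) \<open>w \<noteq> p2\<close> Y(1) Yc Y(3) w_def H(1)[folded w_def] Hc H(3)])
    qed
  qed
qed

lemma key:
  assumes cS: "card S = Suc r" and f: "f1 \<subseteq> S" "f2 \<subseteq> S" "f3 \<subseteq> S"
    and cf: "card f1 = r" "card f2 = r" "card f3 = r"
    and d: "f1 \<noteq> f2" "f1 \<noteq> f3" "f2 \<noteq> f3"
    and l: "live f1" "live f2" "live f3"
  shows "isStep S"
proof -
  have fin: "finite S" using cS by (metis card.infinite nat.distinct(1))
  obtain p1 where p1: "p1 \<in> S" "f1 = S - {p1}" using sub_remove[OF fin f(1)] cS cf by auto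
  obtain p2 where p2: "p2 \<in> S" "f2 = S - {p2}" using sub_remove[OF fin f(2)] cS cf by auto
  obtain p3 where p3: "p3 \<in> S" "f3 = S - {p3}" using sub_remove[OF fin f(3)] cS cf by auto
  have dp: "p1 \<noteq> p2" "p1 \<noteq> p3" "p2 \<noteq> p3" using d p1 p2 p3 by auto
  obtain j1 c1 y1 where Y1: "Ycond j1 c1 y1" "f1 \<subseteq> insert (enc j1 (m + c1)) (E y1)"
    using l(1) unfolding live_def isStep_def by blast
  obtain j2 c2 y2 where Y2: "Ycond j2 c2 y2" "f2 \<subseteq> insert (enc j2 (m + c2)) (E y2)"
    using l(2) unfolding live_def isStep_def by blast
  obtain j3 c3 y3 where Y3: "Ycond j3 c3 y3" "f3 \<subseteq> insert (enc j3 (m + c3)) (E y3)"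
    using l(3) unfolding live_def isStep_def by blast
  show ?thesis
  proof (cases "enc j1 (m + c1) \<in> f1")
    case True
    show ?thesis
      by (rule caseB'[OF fin cS p1(1) p2(1) p3(1) dp Y1(1) Y2(1) Y3(1)]) (use Y1 Y2 Y3 p1 p2 p3 True in auto)
  next
    case F1: False
    show ?thesis
    proof (cases "enc j2 (m + c2) \<in> f2")
      case True
      show ?thesis
        by (rule caseB'[OF fin cS p2(1) p1(1) p3(1) dp(1)[symmetric] dp(3) dp(2) Y2(1) Y1(1) Y3(1)]) (use Y1 Y2 Y3 p1 p2 p3 True in auto)
    next
      case F2: False
      show ?thesis
      proof (cases "enc j3 (m + c3) \<in> f3")
        case True
        show ?thesis
          by (rule caseB'[OF fin cS p3(1) p1(1) p2(1) dp(2)[symmetric] dp(3)[symmetric] dp(1) Y3(1) Y1(1) Y2(1)]) (use Y1 Y2 Y3 p1 p2 p3 True in auto)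
      next
        case F3: False
        have n: "pnorm y1" "pnorm y2" "pnorm y3" using Y1 Y2 Y3 by (simp_all add: Ycond_norm)
        have s1: "f1 \<subseteq> E y1" using Y1 F1 by blast
        have s2: "f2 \<subseteq> E y2" using Y2 F2 by blast
        have s3: "f3 \<subseteq> E y3" using Y3 F3 by blast
        have e1: "f1 = E y1" using s1 cf card_E[OF n(1)] finite_E by (metis card_subset_eq)
        have e2: "f2 = E y2" using s2 cf card_E[OF n(2)] finite_E by (metis card_subset_eq)
        have e3: "f3 = E y3" using s3 cf card_E[OF n(3)] finite_E by (metis card_subset_eq)
        show ?thesis using caseA[OF p1(1) p2(1) p3(1) dp n] e1 e2 e3 p1 p2 p3 by simp
      qed
    qed
  qed
qed

end



context constr
begin

definition N :: nat where "N = 2 * (m^r - 1)"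
definition tj :: "nat \<Rightarrow> nat" where "tj t = (LEAST k. gray m r t k \<noteq> gray m r (Suc t) k)"
definition tc :: "nat \<Rightarrow> nat" where "tc t = min (gray m r t (tj t)) (gray m r (Suc t) (tj t))"
definition P :: "nat \<Rightarrow> (nat \<Rightarrow> nat)" where
  "P i = (if even i then gray m r (i div 2) else (gray m r (i div 2))(tj (i div 2) := m + tc (i div 2)))"
definition S :: "nat \<Rightarrow> nat set" where "S i = E (P i) \<union> E (P (Suc i))"

lemma tr_LEAST: "tr m j c x y \<Longrightarrow> (LEAST k. x k \<noteq> y k) = j \<and> min (x j) (y j) = c"
proof -
  assume t: "tr m j c x y"
  have xy: "(x j = c \<and> y j = Suc c) \<or> (x j = Suc c \<and> y j = c)" using t unfolding tr_def
    by (metis doubleton_eq_iff)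
  have "(LEAST k. x k \<noteq> y k) = j"
  proof (rule Least_equality)
    show "x j \<noteq> y j" using xy by auto
    fix k assume "x k \<noteq> y k"
    hence "k = j" using t unfolding tr_def by auto
    thus "j \<le> k" by simp
  qed
  moreover have "min (x j) (y j) = c" using xy by auto
  ultimately show ?thesis by simp
qed

lemma trP: "Suc t < m^r \<Longrightarrow> tj t < r \<and> tr m (tj t) (tc t) (gray m r t) (gray m r (Suc t))"
proof -
  assume "Suc t < m^r"
  then obtain j c where jc: "j < r" "tr m j c (gray m r t) (gray m r (Suc t))" using gray_step by blast
  have "tj t = j" "tc t = c" using tr_LEAST[OF jc(2)] unfolding tj_def tc_def by auto
  then show ?thesis using jc by simp
qed

lemma gray_Y:
  assumes "Suc t < m^r"
  shows "Ycond (tj t) (tc t) (gray m r t) \<and> Ycond (tj t) (tc t) (gray m r (Suc t))"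
proof -
  have T: "tj t < r" "tr m (tj t) (tc t) (gray m r t) (gray m r (Suc t))" using trP[OF assms] by auto
  have r1: "(\<forall>k<r. gray m r t k < m) \<and> (\<forall>k\<ge>r. gray m r t k = 0)" using gray_range assms by simp
  have r2: "(\<forall>k<r. gray m r (Suc t) k < m) \<and> (\<forall>k\<ge>r. gray m r (Suc t) k = 0)" using gray_range assms by simp
  have xy: "{gray m r t (tj t), gray m r (Suc t) (tj t)} = {tc t, Suc (tc t)}" using T unfolding tr_def by simp
  hence v: "gray m r t (tj t) = tc t \<or> gray m r t (tj t) = Suc (tc t)"
           "gray m r (Suc t) (tj t) = tc t \<or> gray m r (Suc t) (tj t) = Suc (tc t)"
    by (metis doubleton_eq_iff)+
  show ?thesis using T r1 r2 v unfolding Ycond_def tr_def by auto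
qed

lemma gray_norm: "t < m^r \<Longrightarrow> pnorm (gray m r t)"
  using gray_range[of t m r] unfolding pnorm_def by force

lemma N_facts:
  shows "i \<le> N \<Longrightarrow> i div 2 < m^r"
    and "i \<le> N \<Longrightarrow> odd i \<Longrightarrow> Suc (i div 2) < m^r"
    and "i < N \<Longrightarrow> Suc (i div 2) < m^r"
proof -
  have "m^r \<ge> 1" using m2 by simp
  then show "i \<le> N \<Longrightarrow> i div 2 < m^r" "i \<le> N \<Longrightarrow> odd i \<Longrightarrow> Suc (i div 2) < m^r"
     "i < N \<Longrightarrow> Suc (i div 2) < m^r"
    unfolding N_def by (auto elim!: oddE)
qed

lemma N_ge: "1 \<le> N"
proof -
  have "m^r \<ge> m^1" using m2 r3 by (intro power_increasing) auto
  then show ?thesis using m2 unfolding N_def by simp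
qed

lemma S_form: "i < N \<Longrightarrow> \<exists>j c y. Ycond j c y \<and> {P i, P (Suc i)} = {y, y(j := m + c)}"
proof -
  assume i: "i < N"
  define t where "t = i div 2"
  have st: "Suc t < m^r" using N_facts(3)[OF i] by (simp add: t_def)
  have Y: "Ycond (tj t) (tc t) (gray m r t)" "Ycond (tj t) (tc t) (gray m r (Suc t))" using gray_Y[OF st] by auto
  have T: "tr m (tj t) (tc t) (gray m r t) (gray m r (Suc t))" using trP[OF st] by auto
  show ?thesis
  proof (cases "even i")
    case True
    have "P i = gray m r t" using True by (simp add: P_def t_def)
    moreover have "P (Suc i) = (gray m r t)(tj t := m + tc t)" using True by (simp add: P_def t_def)
    ultimately show ?thesis using Y(1)
      by (intro exI[of _ "tj t"] exI[of _ "tc t"] exI[of _ "gray m r t"]) simp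
  next
    case False
    have a: "P i = (gray m r t)(tj t := m + tc t)" using False by (simp add: P_def t_def)
    have "Suc i div 2 = Suc t" using False unfolding t_def by presburger
    hence b: "P (Suc i) = gray m r (Suc t)" using False by (simp add: P_def)
    have "(gray m r t)(tj t := m + tc t) = (gray m r (Suc t))(tj t := m + tc t)"
      using T unfolding tr_def by (auto simp: fun_eq_iff)
    then have "{P i, P (Suc i)} = {gray m r (Suc t), (gray m r (Suc t))(tj t := m + tc t)}"
      using a b by auto
    then show ?thesis using Y(2)
      by (intro exI[of _ "tj t"] exI[of _ "tc t"] exI[of _ "gray m r (Suc t)"]) simp
  qed
qed

lemma Ycond_upd_norm: "Ycond j c y \<Longrightarrow> pnorm (y(j := m + c))"
  unfolding Ycond_def pnorm_def by auto

lemma S_step: "i < N \<Longrightarrow> isStep (S i)"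
proof -
  assume "i < N"
  then obtain j c y where Y: "Ycond j c y" and e: "{P i, P (Suc i)} = {y, y(j := m + c)}" using S_form by blast
  have "j < r" using Y unfolding Ycond_def by simp
  have "S i = E y \<union> E (y(j := m + c))" unfolding S_def using e by (metis Un_commute doubleton_eq_iff)
  also have "\<dots> = insert (enc j (m + c)) (E y)" using E_upd[OF \<open>j < r\<close>] by simp
  finally show ?thesis using Y unfolding isStep_def by blast
qed

lemma P_norm: "i \<le> N \<Longrightarrow> pnorm (P i)"
proof (cases "even i")
  case True
  assume "i \<le> N"
  then show ?thesis using True gray_norm N_facts(1) by (simp add: P_def)
next
  case False
  assume i: "i \<le> N"
  have st: "Suc (i div 2) < m^r" using N_facts(2)[OF i False] .
  have "P i = (gray m r (i div 2))(tj (i div 2) := m + tc (i div 2))" using False by (simp add: P_def)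
  then show ?thesis using Ycond_upd_norm gray_Y[OF st] by metis
qed

lemma P_inj: "i \<le> N \<Longrightarrow> i' \<le> N \<Longrightarrow> P i = P i' \<Longrightarrow> i = i'"
proof -
  assume i: "i \<le> N" and i': "i' \<le> N" and e: "P i = P i'"
  have mainfact: "\<forall>k<r. P l k < m" if "even l" "l \<le> N" for l
    using that gray_range N_facts(1)[OF that(2)] by (simp add: P_def)
  have auxfact: "tj (l div 2) < r \<and> P l (tj (l div 2)) = m + tc (l div 2)" if "odd l" "l \<le> N" for l
    using that trP[OF N_facts(2)[OF that(2) that(1)]] by (simp add: P_def)
  show "i = i'"
  proof (cases "even i")
    case True
    show ?thesis
    proof (cases "even i'")
      case True
      have "gray m r (i div 2) = gray m r (i' div 2)" using e \<open>even i\<close> True by (simp add: P_def)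
      hence "i div 2 = i' div 2" using gray_inj N_facts(1) i i' by blast
      then show ?thesis using \<open>even i\<close> True by presburger
    next
      case False
      have A: "tj (i' div 2) < r \<and> P i' (tj (i' div 2)) = m + tc (i' div 2)" using auxfact[OF False i'] .
      have "P i (tj (i' div 2)) < m" using mainfact[OF \<open>even i\<close> i] A by blast
      then show ?thesis using A e by simp
    qed
  next
    case False
    show ?thesis
    proof (cases "even i'")
      case True
      have A: "tj (i div 2) < r \<and> P i (tj (i div 2)) = m + tc (i div 2)" using auxfact[OF False i] .
      have "P i' (tj (i div 2)) < m" using mainfact[OF True i'] A by blast
      then show ?thesis using A e by simp
    next
      case F': False
      define t where "t = i div 2"
      define t' where "t' = i' div 2"
      have st: "Suc t < m^r" "Suc t' < m^r" using N_facts(2) i i' False F' by (auto simp: t_def t'_def)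
      have T: "tj t < r" "tr m (tj t) (tc t) (gray m r t) (gray m r (Suc t))" using trP[OF st(1)] by auto
      have T': "tj t' < r" "tr m (tj t') (tc t') (gray m r t') (gray m r (Suc t'))" using trP[OF st(2)] by auto
      have Pi: "P i = (gray m r t)(tj t := m + tc t)" using False by (simp add: P_def t_def)
      have Pi': "P i' = (gray m r t')(tj t' := m + tc t')" using F' by (simp add: P_def t'_def)
      have rg: "\<forall>k<r. gray m r t k < m" "\<forall>k<r. gray m r t' k < m" using gray_range st by auto
      have jj: "tj t = tj t'"
      proof (rule ccontr)
        assume ne: "tj t \<noteq> tj t'"
        have "P i (tj t) = m + tc t" using Pi by simp
        moreover have "P i' (tj t) = gray m r t' (tj t)" using Pi' ne by simp
        moreover have "gray m r t' (tj t) < m" using rg T(1) by blast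
        ultimately show False using e by simp
      qed
      have cc: "tc t = tc t'" using Pi Pi' e jj by (metis fun_upd_same add_left_cancel)
      define j where "j = tj t"
      define c where "c = tc t"
      have off: "\<forall>k. k \<noteq> j \<longrightarrow> gray m r t k = gray m r t' k"
        using Pi Pi' e jj unfolding j_def by (metis fun_upd_other)
      have xy: "(gray m r t j = c \<and> gray m r (Suc t) j = Suc c) \<or> (gray m r t j = Suc c \<and> gray m r (Suc t) j = c)"
        using T(2) unfolding tr_def j_def c_def by (metis doubleton_eq_iff)
      have xy': "(gray m r t' j = c \<and> gray m r (Suc t') j = Suc c) \<or> (gray m r t' j = Suc c \<and> gray m r (Suc t') j = c)"
        using T'(2) jj cc unfolding tr_def j_def c_def by (metis doubleton_eq_iff)
      have offT: "\<forall>k. k \<noteq> j \<longrightarrow> gray m r t k = gray m r (Suc t) k" using T(2) unfolding tr_def j_def by auto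
      have offT': "\<forall>k. k \<noteq> j \<longrightarrow> gray m r t' k = gray m r (Suc t') k" using T'(2) jj unfolding tr_def j_def by auto
      have lt: "t < m^r" "t' < m^r" using st by auto
      show ?thesis
      proof (cases "gray m r t j = gray m r t' j")
        case True
        have "gray m r t = gray m r t'" using off True by (metis ext)
        hence "t = t'" using gray_inj lt by blast
        then show ?thesis using False F' unfolding t_def t'_def by presburger
      next
        case ne: False
        have a: "gray m r t = gray m r (Suc t')"
        proof
          fix k show "gray m r t k = gray m r (Suc t') k"
            using off offT' xy xy' ne by (cases "k = j") auto
        qed
        have b: "gray m r (Suc t) = gray m r t'"
        proof
          fix k show "gray m r (Suc t) k = gray m r t' k"
            using off offT xy xy' ne by (cases "k = j") auto
        qed
        have "t = Suc t'" using gray_inj[OF _ st(2) a] st(1) by simp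
        moreover have "Suc t = t'" using gray_inj[OF st(1) _ b] st(2) by simp
        ultimately show ?thesis by simp
      qed
    qed
  qed
qed

lemma S_eq: "i < N \<Longrightarrow> \<exists>j c y. Ycond j c y \<and> {P i, P (Suc i)} = {y, y(j := m + c)} \<and> S i = E y \<union> E (y(j := m + c))"
proof -
  assume "i < N"
  then obtain j c y where Y: "Ycond j c y" and e: "{P i, P (Suc i)} = {y, y(j := m + c)}" using S_form by blast
  have "S i = E y \<union> E (y(j := m + c))" unfolding S_def using e by (metis Un_commute doubleton_eq_iff)
  then show ?thesis using Y e by blast
qed

lemma sub_S: "i < N \<Longrightarrow> l \<le> N \<Longrightarrow> E (P l) \<subseteq> S i \<Longrightarrow> l = i \<or> l = Suc i"
proof -
  assume i: "i < N" and l: "l \<le> N" and sub: "E (P l) \<subseteq> S i"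
  obtain j c y where Y: "Ycond j c y" and e: "{P i, P (Suc i)} = {y, y(j := m + c)}"
    and Si: "S i = E y \<union> E (y(j := m + c))" using S_eq[OF i] by blast
  have "P l = y \<or> P l = y(j := m + c)"
    by (rule E_sub_pair[OF Ycond_norm[OF Y] Ycond_upd_norm[OF Y] P_norm[OF l]]) (use sub Si in auto)
  hence "P l = P i \<or> P l = P (Suc i)" using e by (metis doubleton_eq_iff)
  then show ?thesis using P_inj l i by (metis Suc_leI less_imp_le_nat)
qed

lemma E_sub_S: "i < N \<Longrightarrow> E (P i) \<subseteq> S i \<and> E (P (Suc i)) \<subseteq> S i"
  unfolding S_def by auto

lemma live_EP: "l \<le> N \<Longrightarrow> live (E (P l))"
proof (cases "l < N")
  case True
  then show ?thesis using S_step E_sub_S unfolding live_def by blast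
next
  case False
  assume "l \<le> N"
  hence l: "l = Suc (l - 1)" "l - 1 < N" using False N_ge by auto
  then show ?thesis using S_step[OF l(2)] E_sub_S[OF l(2)] unfolding live_def by (metis)
qed

lemma step_S: "isStep T \<Longrightarrow> \<exists>i<N. T = S i"
proof -
  assume "isStep T"
  then obtain j c y where Y: "Ycond j c y" and T: "T = insert (enc j (m + c)) (E y)"
    unfolding isStep_def by blast
  have jr: "j < r" and cm: "Suc c < m" and yr: "\<forall>k<r. y k < m" "\<forall>k\<ge>r. y k = 0"
    and yj: "y j = c \<or> y j = Suc c" and yl: "\<forall>k<j. y k = Lp m j c k"
    using Y unfolding Ycond_def by auto
  define y0 where "y0 = y(j := c)"
  define y1 where "y1 = y0(j := Suc c)"
  have "\<exists>t. Suc t < m^r \<and> {gray m r t, gray m r (Suc t)} = {y0, y0(j := Suc c)}"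
  proof (rule gray_complete)
    show "j < r" by (rule jr)
    show "Suc c < m" by (rule cm)
    show "\<forall>k<r. y0 k < m" using yr cm by (simp add: y0_def)
    show "\<forall>k\<ge>r. y0 k = 0" using yr jr by (simp add: y0_def)
    show "y0 j = c" by (simp add: y0_def)
    show "\<forall>k<j. y0 k = Lp m j c k" using yl by (simp add: y0_def)
  qed
  then obtain t where st: "Suc t < m^r" and gs: "{gray m r t, gray m r (Suc t)} = {y0, y1}"
    unfolding y1_def by blast
  have tr0: "tr m j c y0 y1" using cm yl unfolding tr_def y0_def y1_def by auto
  have cases: "(gray m r t = y0 \<and> gray m r (Suc t) = y1) \<or> (gray m r t = y1 \<and> gray m r (Suc t) = y0)"
    using gs by (rule doubleton_eq_iff[THEN iffD1])
  have trg: "tr m j c (gray m r t) (gray m r (Suc t))"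
    using cases tr0 tr_sym by blast
  have tjc: "tj t = j" "tc t = c" using tr_LEAST[OF trg] unfolding tj_def tc_def by auto
  have P0: "P (2*t) = gray m r t" by (simp add: P_def)
  have P1: "P (Suc (2*t)) = (gray m r t)(j := m + c)" using tjc by (simp add: P_def)
  have P2': "P (2 * Suc t) = gray m r (Suc t)" by (simp add: P_def)
  have ii: "Suc (Suc (2*t)) = 2 * Suc t" by simp
  have P2: "P (Suc (Suc (2*t))) = gray m r (Suc t)" unfolding ii by (rule P2')
  have u0: "y0(j := m + c) = y(j := m + c)" "y1(j := m + c) = y(j := m + c)" by (simp_all add: y0_def y1_def)
  have gu: "(gray m r t)(j := m + c) = y(j := m + c)" using cases u0 by auto
  have "Suc t \<le> m^r - 1" using st by linarith
  hence idx: "2*t < N" "Suc (2*t) < N" unfolding N_def by linarith+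
  have ET: "T = E y \<union> E (y(j := m + c))" using T E_upd[OF jr] by simp
  have yin: "y = y0 \<or> y = y1"
  proof (cases "y j = c")
    case True
    hence "y = y0" unfolding y0_def by (simp add: fun_upd_idem)
    then show ?thesis ..
  next
    case False
    hence "y j = Suc c" using yj by simp
    hence "y = y1" unfolding y1_def y0_def by (simp add: fun_upd_idem)
    then show ?thesis ..
  qed
  have "y = gray m r t \<or> y = gray m r (Suc t)" using yin cases by blast
  then show ?thesis
  proof
    assume a: "y = gray m r t"
    have "S (2*t) = E y \<union> E (y(j := m + c))" unfolding S_def P0 P1 a[symmetric] ..
    hence "T = S (2*t)" using ET by simp
    then show ?thesis using idx by blast
  next
    assume a: "y = gray m r (Suc t)"
    have "S (Suc (2*t)) = E (y(j := m + c)) \<union> E y" unfolding S_def P1 P2 gu a[symmetric] ..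
    hence "T = S (Suc (2*t))" using ET by (simp add: Un_commute)
    then show ?thesis using idx by blast
  qed
qed

end



lemma three_elems:
  assumes "3 \<le> card A"
  shows "\<exists>a b c. a \<in> A \<and> b \<in> A \<and> c \<in> A \<and> a \<noteq> b \<and> a \<noteq> c \<and> b \<noteq> c"
proof -
  have fin: "finite A" using assms by (metis card.infinite not_numeral_le_zero)
  have "A \<noteq> {}" using assms by auto
  then obtain a where a: "a \<in> A" by auto
  have "2 \<le> card (A - {a})" using assms a fin by simp
  then have "A - {a} \<noteq> {}" by (metis card.empty not_numeral_le_zero)
  then obtain b where b: "b \<in> A - {a}" by auto
  have "1 \<le> card (A - {a} - {b})" using \<open>2 \<le> card (A - {a})\<close> b fin by simp
  then have "A - {a} - {b} \<noteq> {}" by (metis card.empty not_one_le_zero)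
  then obtain c where c: "c \<in> A - {a} - {b}" by auto
  show ?thesis using a b c by blast
qed

lemma boot_gen_Suc: "boot_gen r n G (Suc k) = boot_step r n (boot_gen r n G k)"
  by (simp add: boot_gen_def)

locale constrn = constr +
  fixes n :: nat
  assumes nbig: "2*m*r \<le> n"
begin

definition G0 :: "nat set set" where
  "G0 = {f. card f = r \<and> live f} - (\<lambda>l. E (P l)) ` {1..N}"
definition H :: "nat \<Rightarrow> nat set set" where
  "H k = G0 \<union> (\<lambda>l. E (P l)) ` {..k}"

lemma EP_inj: "l \<le> N \<Longrightarrow> l' \<le> N \<Longrightarrow> E (P l) = E (P l') \<Longrightarrow> l = l'"
  using E_inj P_norm P_inj by metis

lemma card_EP: "l \<le> N \<Longrightarrow> card (E (P l)) = r"
  using card_E P_norm by blast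

lemma mem_H:
  assumes k: "k \<le> N"
  shows "f \<in> H k \<longleftrightarrow> card f = r \<and> live f \<and> (\<forall>l. k < l \<and> l \<le> N \<longrightarrow> f \<noteq> E (P l))"
proof
  assume "f \<in> H k"
  then show "card f = r \<and> live f \<and> (\<forall>l. k < l \<and> l \<le> N \<longrightarrow> f \<noteq> E (P l))"
  proof (cases "f \<in> G0")
    case True
    then show ?thesis unfolding G0_def by auto
  next
    case False
    then obtain l' where l': "l' \<le> k" "f = E (P l')" using \<open>f \<in> H k\<close> unfolding H_def by auto
    have "l' \<le> N" using l' k by simp
    have "\<forall>l. k < l \<and> l \<le> N \<longrightarrow> f \<noteq> E (P l)"
      using EP_inj[OF \<open>l' \<le> N\<close>] l' by fastforce
    then show ?thesis using card_EP live_EP \<open>l' \<le> N\<close> l' by simp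
  qed
next
  assume A: "card f = r \<and> live f \<and> (\<forall>l. k < l \<and> l \<le> N \<longrightarrow> f \<noteq> E (P l))"
  show "f \<in> H k"
  proof (cases "f \<in> (\<lambda>l. E (P l)) ` {1..N}")
    case True
    then obtain l where l: "1 \<le> l" "l \<le> N" "f = E (P l)" by auto
    have "l \<le> k"
    proof (rule ccontr)
      assume "\<not> l \<le> k"
      hence "k < l" by simp
      with A l show False by blast
    qed
    then show ?thesis using l unfolding H_def by auto
  next
    case False
    then show ?thesis using A unfolding H_def G0_def by auto
  qed
qed

lemma sub_diff:
  assumes i: "i < N" and k: "k \<le> N"
  shows "{f. f \<subseteq> S i \<and> card f = r} - H k = (\<lambda>l. E (P l)) ` ({i, Suc i} \<inter> {l. k < l})"
proof
  show "{f. f \<subseteq> S i \<and> card f = r} - H k \<subseteq> (\<lambda>l. E (P l)) ` ({i, Suc i} \<inter> {l. k < l})"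
  proof
    fix f assume f: "f \<in> {f. f \<subseteq> S i \<and> card f = r} - H k"
    have lv: "live f" using f S_step[OF i] unfolding live_def by auto
    obtain l where l: "k < l" "l \<le> N" "f = E (P l)" using f lv mem_H[OF k] by auto
    have "l = i \<or> l = Suc i" using sub_S[OF i l(2)] f l(3) by auto
    then show "f \<in> (\<lambda>l. E (P l)) ` ({i, Suc i} \<inter> {l. k < l})" using l by auto
  qed
next
  show "(\<lambda>l. E (P l)) ` ({i, Suc i} \<inter> {l. k < l}) \<subseteq> {f. f \<subseteq> S i \<and> card f = r} - H k"
  proof
    fix f assume "f \<in> (\<lambda>l. E (P l)) ` ({i, Suc i} \<inter> {l. k < l})"
    then obtain l where l: "l = i \<or> l = Suc i" "k < l" "f = E (P l)" by auto
    have lN: "l \<le> N" using l i by auto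
    have "f \<subseteq> S i" using l E_sub_S[OF i] by auto
    moreover have "card f = r" using card_EP[OF lN] l by simp
    moreover have "f \<notin> H k" using mem_H[OF k] l lN by auto
    ultimately show "f \<in> {f. f \<subseteq> S i \<and> card f = r} - H k" by simp
  qed
qed

lemma S_bound: "i < N \<Longrightarrow> S i \<subseteq> {..<n}"
proof -
  assume "i < N"
  have "S i \<subseteq> {..<2*m*r}" by (rule step_bound[OF S_step[OF \<open>i < N\<close>]])
  also have "\<dots> \<subseteq> {..<n}" using nbig by auto
  finally show ?thesis .
qed

lemma boot_step_H:
  assumes k: "k \<le> N"
  shows "boot_step r n (H k) = (if k < N then insert (E (P (Suc k))) (H k) else H k)"
proof -
  define Z where "Z = {e \<in> complete_rgraph r n. \<exists>S'. S' \<subseteq> {..<n} \<and> card S' = r + 1 \<and>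
      {f. f \<subseteq> S' \<and> card f = r} - H k = {e}}"
  have bs: "boot_step r n (H k) = H k \<union> Z" unfolding boot_step_def Z_def by simp
  have Z1: "e = E (P (Suc k)) \<and> k < N" if e: "e \<in> Z" for e
  proof -
    obtain S' where S': "S' \<subseteq> {..<n}" "card S' = r + 1" "{f. f \<subseteq> S' \<and> card f = r} - H k = {e}"
      using e unfolding Z_def by blast
    have fin: "finite S'" using S'(1) by (meson finite_lessThan finite_subset)
    define A where "A = {f. f \<subseteq> S' \<and> card f = r}"
    have AH: "A - H k = {e}" using S'(3) unfolding A_def .
    have "card A = card S' choose r" unfolding A_def by (rule n_subsets[OF fin])
    hence cs: "card A = Suc r" using S'(2) by simp
    have ein: "e \<in> A" using AH by blast
    have "card (A - {e}) = r" using card_Diff_singleton[OF ein] cs by simp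
    hence "3 \<le> card (A - {e})" using r3 by simp
    then obtain f1 f2 f3 where f: "f1 \<in> A - {e}" "f2 \<in> A - {e}" "f3 \<in> A - {e}"
      "f1 \<noteq> f2" "f1 \<noteq> f3" "f2 \<noteq> f3"
      using three_elems[of "A - {e}"] by blast
    have inH: "f1 \<in> H k" "f2 \<in> H k" "f3 \<in> H k" using f AH by blast+
    have lv: "live f1" "live f2" "live f3" using inH mem_H[OF k] by blast+
    have fA: "f1 \<subseteq> S'" "card f1 = r" "f2 \<subseteq> S'" "card f2 = r" "f3 \<subseteq> S'" "card f3 = r"
      using f unfolding A_def by auto
    have "isStep S'"
      by (rule key[of S' f1 f2 f3]) (use S'(2) fA f(4-6) lv in simp_all)
    then obtain i where i: "i < N" "S' = S i" using step_S by blast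
    have eq: "(\<lambda>l. E (P l)) ` ({i, Suc i} \<inter> {l. k < l}) = {e}" using sub_diff[OF i(1) k] S'(3) i(2) by simp
    have "\<not> k < i"
    proof
      assume ki: "k < i"
      have a: "E (P i) \<in> (\<lambda>l. E (P l)) ` ({i, Suc i} \<inter> {l. k < l})" using ki by blast
      have b: "E (P (Suc i)) \<in> (\<lambda>l. E (P l)) ` ({i, Suc i} \<inter> {l. k < l})" using ki by simp
      have "E (P i) = e" using a unfolding eq by simp
      moreover have "E (P (Suc i)) = e" using b unfolding eq by simp
      ultimately have "E (P i) = E (P (Suc i))" by simp
      hence "i = Suc i" using EP_inj[of i "Suc i"] i(1) by simp
      then show False by simp
    qed
    moreover have "{i, Suc i} \<inter> {l. k < l} \<noteq> {}" using eq by auto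
    ultimately have ik: "i = k" by auto
    have "{i, Suc i} \<inter> {l. k < l} = {Suc k}" using ik by auto
    hence "{E (P (Suc k))} = {e}" using eq by simp
    then show ?thesis using ik i(1) by simp
  qed
  have Z2: "E (P (Suc k)) \<in> Z" if kN: "k < N"
  proof -
    have "E (P (Suc k)) \<in> complete_rgraph r n"
      unfolding complete_rgraph_def using card_EP[of "Suc k"] kN E_sub_S[OF kN] S_bound[OF kN] by auto
    moreover have "S k \<subseteq> {..<n}" using S_bound[OF kN] .
    moreover have "card (S k) = r + 1" using step_card[OF S_step[OF kN]] by simp
    moreover have "{f. f \<subseteq> S k \<and> card f = r} - H k = {E (P (Suc k))}"
      using sub_diff[OF kN k] by auto
    ultimately show ?thesis unfolding Z_def by blast
  qed
  show ?thesis
  proof (cases "k < N")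
    case True
    have "Z = {E (P (Suc k))}" using Z1 Z2[OF True] by blast
    then show ?thesis using bs True by simp
  next
    case False
    have "Z = {}" using Z1 False by blast
    then show ?thesis using bs False by simp
  qed
qed


lemma boot_gen_H: "k \<le> N \<Longrightarrow> boot_gen r n G0 k = H k"
proof (induction k)
  case 0
  have "E (P 0) \<in> G0" unfolding G0_def using card_EP[of 0] live_EP[of 0] EP_inj[of 0] by force
  then show ?case unfolding H_def by (simp add: boot_gen_def insert_absorb)
next
  case (Suc k)
  have "boot_gen r n G0 (Suc k) = boot_step r n (H k)" using Suc by (simp add: boot_gen_Suc)
  also have "\<dots> = insert (E (P (Suc k))) (H k)" using boot_step_H[of k] Suc.prems by simp
  also have "\<dots> = H (Suc k)" unfolding H_def by (auto simp: atMost_Suc)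
  finally show ?case .
qed

lemma running_time_G0: "running_time r n G0 = N"
  unfolding running_time_def
proof (rule Least_equality)
  show "boot_gen r n G0 N = boot_gen r n G0 (Suc N)"
    using boot_gen_H[of N] boot_step_H[of N] by (simp add: boot_gen_Suc)
next
  fix i assume eq: "boot_gen r n G0 i = boot_gen r n G0 (Suc i)"
  show "N \<le> i"
  proof (rule ccontr)
    assume "\<not> N \<le> i"
    hence iN: "i < N" by simp
    have "E (P (Suc i)) \<in> H (Suc i)" unfolding H_def by auto
    moreover have "E (P (Suc i)) \<notin> H i" using mem_H[of i] iN by auto
    ultimately show False using eq boot_gen_H[of i] boot_gen_H[of "Suc i"] iN by auto
  qed
qed

lemma G0_sub: "G0 \<subseteq> complete_rgraph r n"
proof
  fix f assume "f \<in> G0"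
  then have "card f = r" "live f" unfolding G0_def by auto
  then obtain T where "isStep T" "f \<subseteq> T" unfolding live_def by blast
  then have "f \<subseteq> {..<2*m*r}" using step_bound by blast
  then have "f \<subseteq> {..<n}" using nbig by auto
  then show "f \<in> complete_rgraph r n" using \<open>card f = r\<close> unfolding complete_rgraph_def by simp
qed

lemma lower: "N \<le> max_running_time r n"
proof -
  have fin: "finite (Pow (complete_rgraph r n))"
    unfolding complete_rgraph_def by (rule finite_Pow_iff[THEN iffD2]) (auto intro: finite_subset[of _ "Pow {..<n}"])
  have "running_time r n G0 \<in> running_time r n ` Pow (complete_rgraph r n)" using G0_sub by auto
  then show ?thesis unfolding max_running_time_def using running_time_G0 fin by (metis Max_ge finite_imageI)
qed

end



lemma boot_step_sub: "G \<subseteq> complete_rgraph r n \<Longrightarrow> boot_step r n G \<subseteq> complete_rgraph r n"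
  unfolding boot_step_def by auto

lemma boot_step_incr: "G \<subseteq> boot_step r n G"
  unfolding boot_step_def by auto

lemma boot_gen_sub: "G0 \<subseteq> complete_rgraph r n \<Longrightarrow> boot_gen r n G0 i \<subseteq> complete_rgraph r n"
  by (induction i) (auto simp: boot_gen_def boot_step_sub)

lemma finite_K: "finite (complete_rgraph r n)"
  unfolding complete_rgraph_def by (rule finite_subset[of _ "Pow {..<n}"]) auto

lemma card_K: "card (complete_rgraph r n) = n choose r"
  unfolding complete_rgraph_def using n_subsets[of "{..<n}" r] by simp

lemma running_le:
  assumes G0: "G0 \<subseteq> complete_rgraph r n"
  shows "running_time r n G0 \<le> n choose r"
proof -
  define C where "C = n choose r"
  have "\<exists>i\<le>C. boot_gen r n G0 i = boot_gen r n G0 (Suc i)"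
  proof (rule ccontr)
    assume A: "\<not> (\<exists>i\<le>C. boot_gen r n G0 i = boot_gen r n G0 (Suc i))"
    have "i \<le> Suc C \<Longrightarrow> i \<le> card (boot_gen r n G0 i)" for i
    proof (induction i)
      case 0
      then show ?case by simp
    next
      case (Suc i)
      have "i \<le> C" using Suc.prems by simp
      hence ne: "boot_gen r n G0 i \<noteq> boot_gen r n G0 (Suc i)" using A by blast
      have sub: "boot_gen r n G0 i \<subseteq> boot_gen r n G0 (Suc i)"
        using boot_step_incr by (simp add: boot_gen_Suc)
      have fin: "finite (boot_gen r n G0 (Suc i))"
        using boot_gen_sub[OF G0] finite_K finite_subset by blast
      have "card (boot_gen r n G0 i) < card (boot_gen r n G0 (Suc i))"
        using psubset_card_mono[OF fin] sub ne by blast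
      moreover have "i \<le> card (boot_gen r n G0 i)" using Suc.IH Suc.prems by simp
      ultimately show ?case by simp
    qed
    hence "Suc C \<le> card (boot_gen r n G0 (Suc C))" by simp
    moreover have "card (boot_gen r n G0 (Suc C)) \<le> card (complete_rgraph r n)"
      by (rule card_mono[OF finite_K boot_gen_sub[OF G0]])
    ultimately have "Suc C \<le> C" using card_K C_def by simp
    then show False by simp
  qed
  then obtain i where "i \<le> C" "boot_gen r n G0 i = boot_gen r n G0 (Suc i)" by blast
  then have "running_time r n G0 \<le> i" unfolding running_time_def by (intro Least_le) simp
  then show ?thesis using \<open>i \<le> C\<close> C_def by simp
qed

lemma max_le: "max_running_time r n \<le> n choose r"
proof -
  have fin: "finite (running_time r n ` Pow (complete_rgraph r n))" using finite_K by simp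
  have ne: "running_time r n ` Pow (complete_rgraph r n) \<noteq> {}" by blast
  show ?thesis unfolding max_running_time_def by (subst Max_le_iff[OF fin ne]) (auto intro: running_le)
qed

lemma choose_fact_le: "r \<le> n \<Longrightarrow> (n choose r) * fact r \<le> (n::nat) ^ r"
proof -
  assume rn: "r \<le> n"
  have e: "fact n = (n choose r) * fact r * fact (n - r)"
    using binomial_fact_lemma[OF rn] by (simp add: algebra_simps)
  have "fact n div fact (n - r) = (n choose r) * fact r"
    unfolding e by simp
  then show ?thesis using fact_div_fact_le_pow[OF rn] by simp
qed

lemma exp_ge_pow_fact: "(real r) ^ r / fact r \<le> exp (real r)"
proof -
  obtain t where t: "exp (real r) = (\<Sum>i<Suc r. real r ^ i / fact i) + exp t / fact (Suc r) * real r ^ Suc r"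
    using Maclaurin_exp_le[of "real r" "Suc r"] by blast
  have "real r ^ r / fact r \<le> (\<Sum>i<Suc r. real r ^ i / fact i)"
    by (rule member_le_sum) auto
  also have "\<dots> \<le> exp (real r)" unfolding t by (simp add: order.trans)
  finally show ?thesis .
qed

lemma upper_arith:
  assumes "1 \<le> r" "r \<le> n"
  shows "real (n choose r) \<le> real n ^ r * exp (real r) / real r ^ r"
proof -
  have rp: "real r ^ r > 0" using assms by simp
  have "real (n choose r) * fact r \<le> real n ^ r"
    using choose_fact_le[OF assms(2)] by (metis of_nat_fact of_nat_le_iff of_nat_mult of_nat_power)
  hence a: "real (n choose r) \<le> real n ^ r / fact r" by (simp add: field_simps)
  have "1 / fact r \<le> exp (real r) / real r ^ r"
    using exp_ge_pow_fact[of r] rp by (simp add: field_simps)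
  hence "real n ^ r / fact r \<le> real n ^ r * (exp (real r) / real r ^ r)"
    using mult_left_mono[of "1 / fact r" "exp (real r) / real r ^ r" "real n ^ r"] by simp
  then show ?thesis using a by simp
qed




lemma lower_arith:
  fixes r m n :: nat
  assumes r3: "3 \<le> r" and rm: "r \<le> m" and nm: "n < 2*r*(m+1)"
  shows "real n ^ r / (2 ^ (r + 3) * real r ^ r) \<le> real (2*(m^r - 1))"
proof -
  define x where "x = real n / (2 * real r)"
  have rpos: "real r > 0" using r3 by simp
  have mpos: "real m > 0" using r3 rm by simp
  have x0: "0 \<le> x" unfolding x_def by simp
  have xm: "x < real m + 1"
  proof -
    have a: "real n < real (2*r*(m+1))" using nm by (simp only: of_nat_less_iff)
    have b: "real (2*r*(m+1)) = 2 * real r * (real m + 1)" by (simp add: algebra_simps)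
    have "real n / (2 * real r) < (2 * real r * (real m + 1)) / (2 * real r)"
      by (rule divide_strict_right_mono) (use a b rpos in simp_all)
    also have "\<dots> = real m + 1" using rpos by simp
    finally show ?thesis unfolding x_def .
  qed
  have eq: "real n ^ r / (2 ^ (r + 3) * real r ^ r) = x ^ r / 8"
    unfolding x_def by (simp add: power_divide power_mult_distrib power_add field_simps)
  have c1: "x ^ r \<le> (real m + 1) ^ r" using xm x0 by (intro power_mono) auto
  have c2: "(real m + 1) ^ r = real m ^ r * (1 + 1 / real m) ^ r"
  proof -
    have "real m + 1 = real m * (1 + 1 / real m)" using mpos by (simp add: field_simps)
    then show ?thesis by (simp add: power_mult_distrib)
  qed
  have c3: "(1 + 1 / real m) ^ r \<le> exp (real r / real m)"
  proof -
    have "(1 + 1 / real m) ^ r \<le> exp (1 / real m) ^ r"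
      by (intro power_mono) (use mpos in auto)
    also have "exp (1 / real m) ^ r = exp (real r * (1 / real m))" by (rule exp_of_nat_mult[symmetric])
    finally show ?thesis by simp
  qed
  have c4: "exp (real r / real m) \<le> 3"
  proof -
    have "real r / real m \<le> 1" using rm mpos by (simp add: field_simps)
    hence "exp (real r / real m) \<le> exp 1" by simp
    then show ?thesis using exp_le by linarith
  qed
  have "(1 + 1 / real m) ^ r \<le> 3" using c3 c4 by linarith
  hence "real m ^ r * (1 + 1 / real m) ^ r \<le> real m ^ r * 3" by (intro mult_left_mono) auto
  hence xr: "x ^ r \<le> 3 * real m ^ r" using c1 c2 by linarith
  have "m ^ r \<ge> 2"
  proof -
    have "m ^ r \<ge> m ^ 1" using rm r3 by (intro power_increasing) auto
    then show ?thesis using rm r3 by simp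
  qed
  hence mr2: "real (m ^ r) \<ge> 2" by (metis of_nat_le_iff of_nat_numeral)
  have "real (2*(m^r - 1)) = 2 * real (m ^ r) - 2" using \<open>m^r \<ge> 2\<close> by (simp add: of_nat_diff)
  moreover have "x ^ r / 8 \<le> 2 * real (m ^ r) - 2" using xr mr2 by simp
  ultimately show ?thesis using eq by linarith
qed


theorem theorem1p1:
  fixes r n :: nat
  assumes "r \<ge> 3" and "n \<ge> 2 * r ^ 2"
  shows "real n ^ r / (2 ^ (r + 3) * real r ^ r) \<le> real (max_running_time r n)
         \<and> real (max_running_time r n) \<le> real n ^ r * exp (real r) / real r ^ r"
proof -
  define m where "m = n div (2*r)"
  have r3: "3 \<le> r" using assms(1) by simp
  have rpos: "0 < 2*r" using r3 by simp
  have "2*r*r \<le> n" using assms(2) by (simp add: power2_eq_square)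
  hence "(2*r*r) div (2*r) \<le> n div (2*r)" by (rule div_le_mono)
  moreover have "(2*r*r) div (2*r) = r" using rpos by simp
  ultimately have rm: "r \<le> m" by (simp add: m_def)
  have m2: "2 \<le> m" using rm r3 by simp
  have nb: "2*m*r \<le> n"
  proof -
    have "n div (2*r) * (2*r) \<le> n" by (rule div_times_less_eq_dividend)
    then show ?thesis by (simp add: m_def algebra_simps)
  qed
  have nlt: "n < 2*r*(m+1)"
  proof -
    have "n = n div (2*r) * (2*r) + n mod (2*r)" using div_mult_mod_eq[of n "2*r"] by simp
    moreover have "n mod (2*r) < 2*r" using rpos by simp
    ultimately have "n < n div (2*r) * (2*r) + 2*r" by linarith
    then show ?thesis by (simp add: m_def algebra_simps)
  qed
  interpret constrn m r n
    by unfold_locales (use r3 m2 nb in auto)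
  have low: "N \<le> max_running_time r n" by (rule lower)
  have "real n ^ r / (2 ^ (r + 3) * real r ^ r) \<le> real N"
    using lower_arith[OF r3 rm nlt] unfolding N_def .
  also have "real N \<le> real (max_running_time r n)" using low by simp
  finally have A: "real n ^ r / (2 ^ (r + 3) * real r ^ r) \<le> real (max_running_time r n)" .
  have rn: "r \<le> n"
  proof -
    have "r \<le> 2*r*r" using r3 by simp
    then show ?thesis using \<open>2*r*r \<le> n\<close> by linarith
  qed
  have "real (max_running_time r n) \<le> real (n choose r)" using max_le by simp
  also have "\<dots> \<le> real n ^ r * exp (real r) / real r ^ r" using upper_arith[of r n] r3 rn by simp
  finally show ?thesis using A by simp
qed

end
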